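(* Let $V$ be a finite-dimensional vector space over a field with basis $B=\{v_1,\dots,v_N\}$, and let $S$ be a (possibly infinite) set of pairwise commuting endomorphisms of $V$ such that: (a) for each $T\in S$, after reordering $B$, the matrix of $T$ with respect to $B$ is in Jordan canonical form; (b) for each $T\in S$, every Jordan block of size greater than $1$ has eigenvalue $0$. Let $B'\subset B$ be the set of basis vectors that are (genuine, not merely generalized) eigenvectors of every $T\in S$, and assume that distinct elements of $B'$ are distinguished by their $S$-eigenvalues, i.e.\ for $v_i\neq v_j$ in $B'$ there is $T\in S$ whose eigenvalues on $v_i$ and $v_j$ differ. Let $W\subset V$ be a subspace preserved by every $T\in S$. Then $W\neq0$ if and only if $W$ contains some element of $B'$. *)

theory Defs
  imports "Jordan_Normal_Form.Jordan_Normal_Form" "HOL-Combinatorics.Permutations"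
begin

text \<open>V = K^N with basis B = the unit vectors e_0..e_(N-1); an endomorphism T is
  represented by its matrix A w.r.t. B (column j = coordinates of T e_j).\<close>

definition reordered_jordan :: "nat \<Rightarrow> 'a::field mat \<Rightarrow> (nat \<Rightarrow> nat) \<Rightarrow> (nat \<times> 'a) list \<Rightarrow> bool" where
  "reordered_jordan N A \<sigma> n_as \<longleftrightarrow>
     \<sigma> permutes {..<N} \<and> mat N N (\<lambda>(i,j). A $$ (\<sigma> i, \<sigma> j)) = jordan_matrix n_as"

definition common_eigen_basis_vec :: "nat \<Rightarrow> 'a::field mat set \<Rightarrow> nat \<Rightarrow> bool" where
  "common_eigen_basis_vec N S i \<longleftrightarrow>
     i < N \<and> (\<forall>A\<in>S. \<exists>c. A *\<^sub>v unit_vec N i = c \<cdot>\<^sub>v unit_vec N i)"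

definition subspace_of :: "nat \<Rightarrow> 'a::field vec set \<Rightarrow> bool" where
  "subspace_of N W \<longleftrightarrow> W \<subseteq> carrier_vec N \<and> 0\<^sub>v N \<in> W \<and>
     (\<forall>v\<in>W. \<forall>w\<in>W. v + w \<in> W) \<and> (\<forall>c. \<forall>v\<in>W. c \<cdot>\<^sub>v v \<in> W)"

end

theory Submission
  imports Defs
begin

lemma jordan_entries:
  assumes "\<forall>(n, a) \<in> set n_as. 1 < n \<longrightarrow> a = 0"
    and "i < sum_list (map fst n_as)" "j < sum_list (map fst n_as)"
    and "jordan_matrix n_as $$ (i,j) \<noteq> (0::'a::field)"
  shows "i = j \<or> (Suc i = j \<and> jordan_matrix n_as $$ (i,j) = 1 \<and>
           jordan_matrix n_as $$ (i,i) = 0 \<and> jordan_matrix n_as $$ (j,j) = 0)"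
  using assms
proof (induction n_as arbitrary: i j)
  case Nil
  then show ?case by simp
next
  case (Cons na n_as)
  obtain n a where na: "na = (n,a)" by fastforce
  let ?D = "sum_list (map fst n_as)"
  have ih: "\<And>i j. i < ?D \<Longrightarrow> j < ?D \<Longrightarrow> jordan_matrix n_as $$ (i,j) \<noteq> 0 \<Longrightarrow>
     i = j \<or> (Suc i = j \<and> jordan_matrix n_as $$ (i,j) = 1 \<and>
           jordan_matrix n_as $$ (i,i) = 0 \<and> jordan_matrix n_as $$ (j,j) = 0)"
    using Cons by auto
  have a0: "1 < n \<Longrightarrow> a = 0" using Cons.prems(1) na by auto
  have lt: "i < n + ?D" "j < n + ?D" using Cons.prems na by auto
  have E: "\<And>i j. i < n + ?D \<Longrightarrow> j < n + ?D \<Longrightarrow> jordan_matrix (na # n_as) $$ (i,j) =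
     (if i < n then if j < n then (if i = j then a else if Suc i = j then 1 else 0) else 0
      else if j < n then 0 else jordan_matrix n_as $$ (i - n, j - n))"
    unfolding na jordan_matrix_Cons by (subst index_mat_four_block, auto)
  show ?case
  proof (cases "i < n")
    case True
    then show ?thesis using Cons.prems(4) lt a0 unfolding E[OF lt] by (auto simp: E split: if_splits)
  next
    case False
    then have jn: "\<not> j < n" using Cons.prems(4) lt unfolding E[OF lt] by (auto split: if_splits)
    have nz: "jordan_matrix n_as $$ (i - n, j - n) \<noteq> 0" using Cons.prems(4) lt False jn unfolding E[OF lt] by auto
    have i1: "i - n < ?D" "j - n < ?D" using lt False jn by auto
    have ii: "i < n + ?D" "j < n + ?D" using lt by auto
    have e1: "jordan_matrix (na # n_as) $$ (i,j) = jordan_matrix n_as $$ (i - n, j - n)"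
      using E[OF ii] False jn by simp
    have e2: "jordan_matrix (na # n_as) $$ (i,i) = jordan_matrix n_as $$ (i - n, i - n)"
      using E[OF ii(1) ii(1)] False by simp
    have e3: "jordan_matrix (na # n_as) $$ (j,j) = jordan_matrix n_as $$ (j - n, j - n)"
      using E[OF ii(2) ii(2)] jn by simp
    have "Suc (i - n) = j - n \<longleftrightarrow> Suc i = j" "i - n = j - n \<longleftrightarrow> i = j" using False jn by auto
    then show ?thesis using ih[OF i1 nz] e1 e2 e3 by metis
  qed
qed

definition jstruct :: "nat \<Rightarrow> 'a::field mat \<Rightarrow> (nat \<Rightarrow> nat) \<Rightarrow> bool" where
  "jstruct N A \<sigma> \<longleftrightarrow> A \<in> carrier_mat N N \<and> \<sigma> permutes {..<N} \<and>
    (\<forall>i<N. \<forall>j<N. A $$ (\<sigma> i, \<sigma> j) \<noteq> 0 \<longrightarrow> i = j \<or>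
       (Suc i = j \<and> A $$ (\<sigma> i, \<sigma> j) = 1 \<and> A $$ (\<sigma> i, \<sigma> i) = 0 \<and> A $$ (\<sigma> j, \<sigma> j) = 0))"

lemma to_jstruct:
  assumes "A \<in> carrier_mat N N" "reordered_jordan N A \<sigma> n_as"
    "\<forall>(n, a) \<in> set n_as. 1 < n \<longrightarrow> a = 0"
  shows "jstruct N A \<sigma>"
proof -
  have p: "\<sigma> permutes {..<N}" and eq: "mat N N (\<lambda>(i,j). A $$ (\<sigma> i, \<sigma> j)) = jordan_matrix n_as"
    using assms(2) unfolding reordered_jordan_def by auto
  have D: "sum_list (map fst n_as) = N"
    using arg_cong[OF eq, of dim_row] by simp
  have ix: "\<And>i j. i < N \<Longrightarrow> j < N \<Longrightarrow> A $$ (\<sigma> i, \<sigma> j) = jordan_matrix n_as $$ (i,j)"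
    by (simp add: eq[symmetric])
  show ?thesis unfolding jstruct_def
  proof (intro conjI assms(1) p allI impI)
    fix i j assume ij: "i < N" "j < N" "A $$ (\<sigma> i, \<sigma> j) \<noteq> 0"
    then show "i = j \<or> (Suc i = j \<and> A $$ (\<sigma> i, \<sigma> j) = 1 \<and> A $$ (\<sigma> i, \<sigma> i) = 0 \<and> A $$ (\<sigma> j, \<sigma> j) = 0)"
      using jordan_entries[OF assms(3), of i j] D ix by auto
  qed
qed

lemma perm_inv_lt:
  assumes "\<sigma> permutes {..<N}" "p < N"
  shows "inv_into UNIV \<sigma> p < N" "\<sigma> (inv_into UNIV \<sigma> p) = p"
proof -
  show "\<sigma> (inv_into UNIV \<sigma> p) = p" using assms permutes_inverses(1) by fastforce
  have "inv_into UNIV \<sigma> permutes {..<N}" using assms permutes_inv by blast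
  then show "inv_into UNIV \<sigma> p < N" using assms permutes_in_image by fastforce
qed

lemma jstruct_row_inj:
  assumes "jstruct N A \<sigma>" "p < N" "q1 < N" "q2 < N" "A $$ (p,q1) \<noteq> 0" "A $$ (p,q2) \<noteq> 0"
  shows "q1 = q2"
proof -
  have pm: "\<sigma> permutes {..<N}" using assms(1) jstruct_def by blast
  define i j1 j2 where "i = inv_into UNIV \<sigma> p" "j1 = inv_into UNIV \<sigma> q1" "j2 = inv_into UNIV \<sigma> q2"
  have lt: "i < N" "j1 < N" "j2 < N" and eqs: "p = \<sigma> i" "q1 = \<sigma> j1" "q2 = \<sigma> j2"
    using perm_inv_lt[OF pm] assms unfolding i_j1_j2_def by auto
  have h1: "i = j1 \<or> (Suc i = j1 \<and> A $$ (\<sigma> i, \<sigma> i) = 0)"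
    using assms(1,5) lt eqs unfolding jstruct_def by blast
  have h2: "i = j2 \<or> (Suc i = j2 \<and> A $$ (\<sigma> i, \<sigma> i) = 0)"
    using assms(1,6) lt eqs unfolding jstruct_def by blast
  show ?thesis using h1 h2 assms(5,6) eqs by auto
qed

lemma jstruct_col_inj:
  assumes "jstruct N A \<sigma>" "p1 < N" "p2 < N" "q < N" "A $$ (p1,q) \<noteq> 0" "A $$ (p2,q) \<noteq> 0"
  shows "p1 = p2"
proof -
  have pm: "\<sigma> permutes {..<N}" using assms(1) jstruct_def by blast
  define i1 i2 j where "i1 = inv_into UNIV \<sigma> p1" "i2 = inv_into UNIV \<sigma> p2" "j = inv_into UNIV \<sigma> q"
  have lt: "i1 < N" "i2 < N" "j < N" and eqs: "p1 = \<sigma> i1" "p2 = \<sigma> i2" "q = \<sigma> j"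
    using perm_inv_lt[OF pm] assms unfolding i1_i2_j_def by auto
  have h1: "i1 = j \<or> (Suc i1 = j \<and> A $$ (\<sigma> j, \<sigma> j) = 0)"
    using assms(1,5) lt eqs unfolding jstruct_def by blast
  have h2: "i2 = j \<or> (Suc i2 = j \<and> A $$ (\<sigma> j, \<sigma> j) = 0)"
    using assms(1,6) lt eqs unfolding jstruct_def by blast
  show ?thesis using h1 h2 assms(5,6) eqs by auto
qed

lemma jstruct_off:
  assumes "jstruct N A \<sigma>" "p < N" "q < N" "A $$ (p,q) \<noteq> 0" "p \<noteq> q"
  shows "A $$ (p,q) = 1" "A $$ (q,q) = 0" "A $$ (p,p) = 0"
proof -
  have pm: "\<sigma> permutes {..<N}" using assms(1) jstruct_def by blast
  define i j where "i = inv_into UNIV \<sigma> p" "j = inv_into UNIV \<sigma> q"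
  have lt: "i < N" "j < N" and eqs: "p = \<sigma> i" "q = \<sigma> j"
    using perm_inv_lt[OF pm] assms unfolding i_j_def by auto
  have "i = j \<or> (Suc i = j \<and> A $$ (\<sigma> i, \<sigma> j) = 1 \<and> A $$ (\<sigma> i, \<sigma> i) = 0 \<and> A $$ (\<sigma> j, \<sigma> j) = 0)"
    using assms(1,4) lt eqs unfolding jstruct_def by blast
  then show "A $$ (p,q) = 1" "A $$ (q,q) = 0" "A $$ (p,p) = 0" using eqs assms(5) by auto
qed

lemma mult_unit_col:
  fixes A :: "'a::field mat"
  assumes "A \<in> carrier_mat N N" "k < N"
  shows "A *\<^sub>v unit_vec N k = vec N (\<lambda>p. A $$ (p,k))"
proof (rule eq_vecI)
  show "dim_vec (A *\<^sub>v unit_vec N k) = dim_vec (vec N (\<lambda>p. A $$ (p,k)))" using assms by simp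
  fix p assume "p < dim_vec (vec N (\<lambda>p. A $$ (p,k)))"
  then have p: "p < N" by simp
  have "(A *\<^sub>v unit_vec N k) $ p = (\<Sum>q\<in>{0..<N}. A $$ (p,q) * unit_vec N k $ q)"
    using assms p by (simp add: scalar_prod_def)
  also have "\<dots> = (\<Sum>q\<in>{0..<N}. if q = k then A $$ (p,k) else 0)"
    using assms by (intro sum.cong) auto
  also have "\<dots> = A $$ (p,k)" using assms by simp
  finally show "(A *\<^sub>v unit_vec N k) $ p = vec N (\<lambda>p. A $$ (p,k)) $ p" using p by simp
qed

lemma jstruct_col_off:
  assumes "jstruct N A \<sigma>" "p < N" "k < N" "A $$ (p,k) \<noteq> 0" "p \<noteq> k"
  shows "A *\<^sub>v unit_vec N k = unit_vec N p"
proof -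
  have c: "A \<in> carrier_mat N N" using assms(1) jstruct_def by blast
  show ?thesis unfolding mult_unit_col[OF c assms(3)]
  proof (rule eq_vecI)
    fix p' assume "p' < dim_vec (unit_vec N p :: 'a vec)"
    then have p': "p' < N" by simp
    show "vec N (\<lambda>p. A $$ (p, k)) $ p' = unit_vec N p $ p'"
    proof (cases "p' = p")
      case True
      then show ?thesis using jstruct_off(1)[OF assms] p' assms(2) by simp
    next
      case False
      have "A $$ (p', k) = 0"
      proof (rule ccontr)
        assume "A $$ (p', k) \<noteq> 0"
        from jstruct_col_inj[OF assms(1) p' assms(2,3) this assms(4)] False show False by simp
      qed
      then show ?thesis using False p' assms(2) by simp
    qed
  qed auto
qed

lemma jstruct_col_diag:
  fixes A :: "'a::field mat"
  assumes "A \<in> carrier_mat N N" "k < N" "\<forall>p<N. p \<noteq> k \<longrightarrow> A $$ (p,k) = 0"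
  shows "A *\<^sub>v unit_vec N k = A $$ (k,k) \<cdot>\<^sub>v unit_vec N k"
  unfolding mult_unit_col[OF assms(1,2)]
  by (rule eq_vecI) (use assms in auto)


lemma mat_vec_zero':
  fixes A :: "'a::field mat"
  assumes "A \<in> carrier_mat nr n"
  shows "A *\<^sub>v 0\<^sub>v n = 0\<^sub>v nr"
  by (rule eq_vecI) (use assms in \<open>auto simp: scalar_prod_def\<close>)

lemma jstruct_nilp:
  fixes A :: "'a::field mat"
  assumes js: "jstruct N A \<sigma>"
  shows "t < N \<Longrightarrow> A $$ (\<sigma> t, \<sigma> t) = 0 \<Longrightarrow> (A ^\<^sub>m Suc t) *\<^sub>v unit_vec N (\<sigma> t) = 0\<^sub>v N"
proof (induction t)
  have c: "A \<in> carrier_mat N N" and pm: "\<sigma> permutes {..<N}" using js jstruct_def by blast+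
  have sig: "\<And>i. i < N \<Longrightarrow> \<sigma> i < N" using pm permutes_in_image by fastforce
  {
  case 0
  have z: "\<forall>p<N. A $$ (p, \<sigma> 0) = 0"
  proof (intro allI impI)
    fix p assume p: "p < N"
    define i where "i = inv_into UNIV \<sigma> p"
    have i: "i < N" "\<sigma> i = p" using perm_inv_lt[OF pm p] i_def by auto
    show "A $$ (p, \<sigma> 0) = 0"
    proof (rule ccontr)
      assume "A $$ (p, \<sigma> 0) \<noteq> 0"
      then have "i = 0 \<or> Suc i = 0" using js i 0 unfolding jstruct_def by blast
      then show False using i 0 \<open>A $$ (p, \<sigma> 0) \<noteq> 0\<close> by auto
    qed
  qed
  have "A *\<^sub>v unit_vec N (\<sigma> 0) = 0\<^sub>v N"
    unfolding mult_unit_col[OF c sig[OF 0(1)]] using z by (intro eq_vecI) auto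
  moreover have "A ^\<^sub>m Suc 0 = A" using c by simp
  ultimately show ?case by simp
  }
next
  have c: "A \<in> carrier_mat N N" and pm: "\<sigma> permutes {..<N}" using js jstruct_def by blast+
  have sig: "\<And>i. i < N \<Longrightarrow> \<sigma> i < N" using pm permutes_in_image by fastforce
  case (Suc t)
  define c0 where "c0 = A $$ (\<sigma> t, \<sigma> (Suc t))"
  have z: "\<forall>p<N. A $$ (p, \<sigma> (Suc t)) = (if p = \<sigma> t then c0 else 0)"
  proof (intro allI impI)
    fix p assume p: "p < N"
    define i where "i = inv_into UNIV \<sigma> p"
    have i: "i < N" "\<sigma> i = p" using perm_inv_lt[OF pm p] i_def by auto
    show "A $$ (p, \<sigma> (Suc t)) = (if p = \<sigma> t then c0 else 0)"
    proof (cases "p = \<sigma> t")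
      case True then show ?thesis using c0_def by simp
    next
      case False
      show ?thesis
      proof (rule ccontr)
        assume ne: "A $$ (p, \<sigma> (Suc t)) \<noteq> (if p = \<sigma> t then c0 else 0)"
        then have "A $$ (\<sigma> i, \<sigma> (Suc t)) \<noteq> 0" using False i by simp
        then have "i = Suc t \<or> Suc i = Suc t" using js i Suc.prems unfolding jstruct_def by blast
        then show False using i Suc.prems ne False by auto
      qed
    qed
  qed
  have col: "A *\<^sub>v unit_vec N (\<sigma> (Suc t)) = c0 \<cdot>\<^sub>v unit_vec N (\<sigma> t)"
    unfolding mult_unit_col[OF c sig[OF Suc.prems(1)]] using z Suc.prems sig by (intro eq_vecI) auto
  have "(A ^\<^sub>m Suc (Suc t)) *\<^sub>v unit_vec N (\<sigma> (Suc t)) = (A ^\<^sub>m Suc t) *\<^sub>v (A *\<^sub>v unit_vec N (\<sigma> (Suc t)))"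
    using c Suc.prems sig by (simp only: pow_mat.simps(2)[of A "Suc t"]) (rule assoc_mult_mat_vec[of _ N N _ N], auto)
  also have "\<dots> = c0 \<cdot>\<^sub>v ((A ^\<^sub>m Suc t) *\<^sub>v unit_vec N (\<sigma> t))"
    unfolding col using c Suc.prems sig by (intro mult_mat_vec[of _ N N]) auto
  also have "\<dots> = 0\<^sub>v N"
  proof (cases "c0 = 0")
    case True then show ?thesis using c by (intro eq_vecI) auto
  next
    case False
    have tt: "t < N" "Suc t < N" using Suc.prems by auto
    have "A $$ (\<sigma> t, \<sigma> (Suc t)) \<noteq> 0" using False c0_def by simp
    then have "t = Suc t \<or> (Suc t = Suc t \<and> A $$ (\<sigma> t, \<sigma> (Suc t)) = 1 \<and> A $$ (\<sigma> t, \<sigma> t) = 0 \<and> A $$ (\<sigma> (Suc t), \<sigma> (Suc t)) = 0)"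
      using js tt unfolding jstruct_def by blast
    then have "A $$ (\<sigma> t, \<sigma> t) = 0" by simp
    then show ?thesis using Suc.IH Suc.prems by (intro eq_vecI) auto
  qed
  finally show ?case .
qed

inductive_set mon :: "nat \<Rightarrow> 'a::field mat set \<Rightarrow> 'a mat set" for N S where
  mon_one: "1\<^sub>m N \<in> mon N S"
| mon_step: "X \<in> mon N S \<Longrightarrow> B \<in> S \<Longrightarrow> X * B \<in> mon N S"

lemma mon_carrier:
  assumes "\<forall>A\<in>S. A \<in> carrier_mat N N" "X \<in> mon N S"
  shows "X \<in> carrier_mat N N"
  using assms(2) by induction (use assms(1) in auto)

lemma mon_comm:
  assumes cS: "\<forall>A\<in>S. A \<in> carrier_mat N N" and cm: "\<forall>A\<in>S. \<forall>C\<in>S. A * C = C * A"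
    and "X \<in> mon N S" "B \<in> S"
  shows "X * B = B * X"
  using assms(3)
proof induction
  case mon_one
  have "B \<in> carrier_mat N N" using cS assms(4) by auto
  then show ?case using left_mult_one_mat[of B N N] right_mult_one_mat[of B N N] by auto
next
  case (mon_step X C)
  have X: "X \<in> carrier_mat N N" using mon_carrier[OF cS mon_step.hyps(1)] .
  have C: "C \<in> carrier_mat N N" and B: "B \<in> carrier_mat N N" using cS mon_step assms(4) by auto
  have "X * C * B = X * (C * B)" using X B C by simp
  also have "\<dots> = X * (B * C)" using cm mon_step assms(4) by metis
  also have "\<dots> = (X * B) * C" using X B C by simp
  also have "\<dots> = (B * X) * C" using mon_step by simp
  also have "\<dots> = B * (X * C)" using X B C by simp
  finally show ?case .
qed

lemma pow_comm1:
  fixes X B :: "'a::field mat"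
  assumes X: "X \<in> carrier_mat n n" and B: "B \<in> carrier_mat n n" and cm: "X * B = B * X"
  shows "B ^\<^sub>m k * X = X * B ^\<^sub>m k"
proof (induction k)
  case 0 then show ?case using X B by (simp add: left_mult_one_mat right_mult_one_mat)
next
  case (Suc k)
  have Bk: "B ^\<^sub>m k \<in> carrier_mat n n" using B by simp
  have "B ^\<^sub>m Suc k * X = B ^\<^sub>m k * (B * X)" by (simp only: pow_mat.simps) (rule assoc_mult_mat[OF Bk B X])
  also have "\<dots> = B ^\<^sub>m k * (X * B)" using cm by simp
  also have "\<dots> = (B ^\<^sub>m k * X) * B" by (rule assoc_mult_mat[OF Bk X B, symmetric])
  also have "\<dots> = (X * B ^\<^sub>m k) * B" using Suc by simp
  also have "\<dots> = X * (B ^\<^sub>m k * B)" by (rule assoc_mult_mat[OF X Bk B])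
  finally show ?case by simp
qed

lemma pow_comm:
  fixes X B :: "'a::field mat"
  assumes X: "X \<in> carrier_mat n n" and B: "B \<in> carrier_mat n n" and cm: "X * B = B * X"
  shows "(X * B) ^\<^sub>m k = X ^\<^sub>m k * B ^\<^sub>m k"
proof (induction k)
  case 0 then show ?case using X B by simp
next
  case (Suc k)
  have Bk: "B ^\<^sub>m k \<in> carrier_mat n n" and Xk: "X ^\<^sub>m k \<in> carrier_mat n n" using B X by simp_all
  have "(X * B) ^\<^sub>m Suc k = X ^\<^sub>m k * B ^\<^sub>m k * (X * B)" using Suc by simp
  also have "\<dots> = X ^\<^sub>m k * (B ^\<^sub>m k * (X * B))" by (rule assoc_mult_mat[OF Xk Bk mult_carrier_mat[OF X B]])
  also have "\<dots> = X ^\<^sub>m k * ((B ^\<^sub>m k * X) * B)" using assoc_mult_mat[OF Bk X B] by simp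
  also have "\<dots> = X ^\<^sub>m k * ((X * B ^\<^sub>m k) * B)" using pow_comm1[OF X B cm] by simp
  also have "\<dots> = X ^\<^sub>m k * (X * (B ^\<^sub>m k * B))" using assoc_mult_mat[OF X Bk B] by simp
  also have "\<dots> = (X ^\<^sub>m k * X) * (B ^\<^sub>m k * B)" by (rule assoc_mult_mat[OF Xk X mult_carrier_mat[OF Bk B], symmetric])
  finally show ?case by simp
qed


definition prec :: "nat \<Rightarrow> 'a::field mat set \<Rightarrow> nat \<Rightarrow> nat \<Rightarrow> bool" where
  "prec N S k' k \<longleftrightarrow> (\<exists>A\<in>S. \<exists>X\<in>mon N S. \<exists>c p. c \<noteq> 0 \<and> p < N \<and> p \<noteq> k \<and> A $$ (p,k) \<noteq> 0 \<and>
      X *\<^sub>v unit_vec N p = c \<cdot>\<^sub>v unit_vec N k')"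

definition hgt :: "nat \<Rightarrow> 'a::field mat set \<Rightarrow> nat \<Rightarrow> nat" where
  "hgt N S k = card {k'. k' < N \<and> prec N S k' k}"

lemma hgt_le: "hgt N S k \<le> N"
proof -
  have "card {k'. k' < N \<and> prec N S k' k} \<le> card {..<N}" by (intro card_mono) auto
  then show ?thesis unfolding hgt_def by simp
qed

lemma prec_irrefl:
  fixes S :: "'a::field mat set"
  assumes J: "\<forall>A\<in>S. \<exists>\<sigma>. jstruct N A \<sigma>" and cS: "\<forall>A\<in>S. A \<in> carrier_mat N N"
    and cm: "\<forall>A\<in>S. \<forall>C\<in>S. A * C = C * A" and p: "p < N"
  shows "\<not> prec N S p p"
proof
  assume "prec N S p p"
  then obtain B X c p2 where B: "B \<in> S" and X: "X \<in> mon N S" and c: "c \<noteq> 0" and p2: "p2 < N" "p2 \<noteq> p"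
    and Bp: "B $$ (p2,p) \<noteq> 0" and Xe: "X *\<^sub>v unit_vec N p2 = c \<cdot>\<^sub>v unit_vec N p"
    unfolding prec_def by blast
  obtain \<sigma> where js: "jstruct N B \<sigma>" using J B by blast
  have Bc: "B \<in> carrier_mat N N" and Xc: "X \<in> carrier_mat N N"
    using cS B mon_carrier[OF cS X] by auto
  have pm: "\<sigma> permutes {..<N}" using js jstruct_def by blast
  have Be: "B *\<^sub>v unit_vec N p = unit_vec N p2" using jstruct_col_off[OF js p2(1) p Bp p2(2)] .
  have Bpp: "B $$ (p,p) = 0" using jstruct_off(2)[OF js p2(1) p Bp p2(2)] .
  define t where "t = inv_into UNIV \<sigma> p"
  have t: "t < N" "\<sigma> t = p" using perm_inv_lt[OF pm p] t_def by auto
  have nil: "(B ^\<^sub>m Suc t) *\<^sub>v unit_vec N p = 0\<^sub>v N" using jstruct_nilp[OF js t(1)] t Bpp by simp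
  define Y where "Y = X * B"
  have Yc: "Y \<in> carrier_mat N N" using Xc Bc Y_def by simp
  have Ye: "Y *\<^sub>v unit_vec N p = c \<cdot>\<^sub>v unit_vec N p"
    unfolding Y_def using Xc Bc p Be Xe by simp
  have Yn: "(Y ^\<^sub>m n) *\<^sub>v unit_vec N p = c ^ n \<cdot>\<^sub>v unit_vec N p" for n
  proof (induction n)
    case 0 then show ?case using Yc p by simp
  next
    case (Suc n)
    have "(Y ^\<^sub>m Suc n) *\<^sub>v unit_vec N p = (Y ^\<^sub>m n) *\<^sub>v (Y *\<^sub>v unit_vec N p)"
      by (simp only: pow_mat.simps(2)) (rule assoc_mult_mat_vec[of _ N N _ N], use Yc p in auto)
    also have "\<dots> = c \<cdot>\<^sub>v ((Y ^\<^sub>m n) *\<^sub>v unit_vec N p)" unfolding Ye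
      by (rule mult_mat_vec[of _ N N]) (use Yc p in auto)
    also have "\<dots> = c ^ Suc n \<cdot>\<^sub>v unit_vec N p" unfolding Suc smult_smult_assoc by simp
    finally show ?case .
  qed
  have "Y ^\<^sub>m Suc t = X ^\<^sub>m Suc t * B ^\<^sub>m Suc t"
    unfolding Y_def by (rule pow_comm[OF Xc Bc mon_comm[OF cS cm X B]])
  moreover have "(X ^\<^sub>m Suc t * B ^\<^sub>m Suc t) *\<^sub>v unit_vec N p = (X ^\<^sub>m Suc t) *\<^sub>v ((B ^\<^sub>m Suc t) *\<^sub>v unit_vec N p)"
    by (rule assoc_mult_mat_vec[OF pow_carrier_mat[OF Xc] pow_carrier_mat[OF Bc]]) (use p in simp)
  ultimately have "(Y ^\<^sub>m Suc t) *\<^sub>v unit_vec N p = (X ^\<^sub>m Suc t) *\<^sub>v 0\<^sub>v N"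
    using nil by simp
  also have "\<dots> = 0\<^sub>v N" by (rule mat_vec_zero'[OF pow_carrier_mat[OF Xc]])
  finally have "c ^ Suc t \<cdot>\<^sub>v unit_vec N p = 0\<^sub>v N" using Yn[of "Suc t"] by argo
  then have "(c ^ Suc t \<cdot>\<^sub>v unit_vec N p) $ p = 0" using p by simp
  then show False using p c by simp
qed

lemma hgt_less:
  fixes S :: "'a::field mat set"
  assumes J: "\<forall>A\<in>S. \<exists>\<sigma>. jstruct N A \<sigma>" and cS: "\<forall>A\<in>S. A \<in> carrier_mat N N"
    and cm: "\<forall>A\<in>S. \<forall>C\<in>S. A * C = C * A" and p: "p < N" and k: "k < N"
    and A: "A \<in> S" and Apk: "A $$ (p,k) \<noteq> 0" and pk: "p \<noteq> k"
  shows "hgt N S p < hgt N S k"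
proof -
  have sub: "{k'. k' < N \<and> prec N S k' p} \<subseteq> {k'. k' < N \<and> prec N S k' k}"
  proof safe
    fix k' assume k': "k' < N" "prec N S k' p"
    then obtain B X c p2 where B: "B \<in> S" and X: "X \<in> mon N S" and c: "c \<noteq> 0" and p2: "p2 < N" "p2 \<noteq> p"
      and Bp: "B $$ (p2,p) \<noteq> 0" and Xe: "X *\<^sub>v unit_vec N p2 = c \<cdot>\<^sub>v unit_vec N k'"
      unfolding prec_def by blast
    obtain \<sigma> where js: "jstruct N B \<sigma>" using J B by blast
    have Bc: "B \<in> carrier_mat N N" and Xc: "X \<in> carrier_mat N N"
      using cS B mon_carrier[OF cS X] by auto
    have Be: "B *\<^sub>v unit_vec N p = unit_vec N p2" using jstruct_col_off[OF js p2(1) p Bp p2(2)] .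
    have "(X * B) *\<^sub>v unit_vec N p = c \<cdot>\<^sub>v unit_vec N k'" using Xc Bc p Be Xe by simp
    moreover have "X * B \<in> mon N S" using X B by (rule mon_step)
    ultimately show "prec N S k' k" unfolding prec_def using A c p Apk pk by blast
  qed
  have "prec N S p k" unfolding prec_def
    using A mon_one[of N S] p Apk pk by (intro bexI[of _ A] bexI[of _ "1\<^sub>m N"] exI[of _ 1] exI[of _ p]) auto
  then have "p \<in> {k'. k' < N \<and> prec N S k' k}" "p \<notin> {k'. k' < N \<and> prec N S k' p}"
    using prec_irrefl[OF J cS cm p] p by auto
  then have "{k'. k' < N \<and> prec N S k' p} \<subset> {k'. k' < N \<and> prec N S k' k}" using sub by blast
  then show ?thesis unfolding hgt_def by (intro psubset_card_mono) auto
qed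


lemma mv_index:
  fixes A :: "'a::field mat"
  assumes "A \<in> carrier_mat N N" "w \<in> carrier_vec N" "p < N"
  shows "(A *\<^sub>v w) $ p = (\<Sum>q\<in>{0..<N}. A $$ (p,q) * w $ q)"
  using assms by (simp add: scalar_prod_def)

theorem lemma5p2:
  fixes N :: nat and S :: "'a::field mat set" and W :: "'a vec set"
  assumes S_dim: "\<forall>A\<in>S. A \<in> carrier_mat N N"
    and S_comm: "\<forall>A\<in>S. \<forall>C\<in>S. A * C = C * A"
    and S_jordan: "\<forall>A\<in>S. \<exists>\<sigma> n_as. reordered_jordan N A \<sigma> n_as \<and>
                        (\<forall>(n, a) \<in> set n_as. 1 < n \<longrightarrow> a = 0)"
    and S_sep: "\<forall>i j. common_eigen_basis_vec N S i \<and> common_eigen_basis_vec N S j \<and> i \<noteq> j \<longrightarrow>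
                   (\<exists>A\<in>S. \<exists>c d. A *\<^sub>v unit_vec N i = c \<cdot>\<^sub>v unit_vec N i \<and>
                                  A *\<^sub>v unit_vec N j = d \<cdot>\<^sub>v unit_vec N j \<and> c \<noteq> d)"
    and W_sub: "subspace_of N W"
    and W_inv: "\<forall>A\<in>S. \<forall>w\<in>W. A *\<^sub>v w \<in> W"
  shows "W \<noteq> {0\<^sub>v N} \<longleftrightarrow> (\<exists>i. common_eigen_basis_vec N S i \<and> unit_vec N i \<in> W)"
proof
  assume "\<exists>i. common_eigen_basis_vec N S i \<and> unit_vec N i \<in> W"
  then obtain i where i: "i < N" "unit_vec N i \<in> W" unfolding common_eigen_basis_vec_def by blast
  show "W \<noteq> {0\<^sub>v N}"
  proof
    assume "W = {0\<^sub>v N}"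
    then have "unit_vec N i = (0\<^sub>v N :: 'a vec)" using i by auto
    then have "unit_vec N i $ i = (0\<^sub>v N :: 'a vec) $ i" by simp
    then show False using i by simp
  qed
next
  assume Wne: "W \<noteq> {0\<^sub>v N}"
  have Wc: "W \<subseteq> carrier_vec N" and W0: "0\<^sub>v N \<in> W"
    and Wadd: "\<forall>v\<in>W. \<forall>w\<in>W. v + w \<in> W" and Wsm: "\<forall>c. \<forall>v\<in>W. c \<cdot>\<^sub>v v \<in> W"
    using W_sub unfolding subspace_of_def by auto
  have J: "\<forall>A\<in>S. \<exists>\<sigma>. jstruct N A \<sigma>"
  proof
    fix A assume A: "A \<in> S"
    then obtain \<sigma> n_as where "reordered_jordan N A \<sigma> n_as" "\<forall>(n, a) \<in> set n_as. 1 < n \<longrightarrow> a = 0"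
      using S_jordan by blast
    then have "jstruct N A \<sigma>" using to_jstruct[of A N \<sigma> n_as] S_dim A by blast
    then show "\<exists>\<sigma>. jstruct N A \<sigma>" by blast
  qed
  define supp :: "'a vec \<Rightarrow> nat set" where "supp w = {k. k < N \<and> w $ k \<noteq> 0}" for w
  have supp_fin: "finite (supp w)" for w unfolding supp_def by auto
  have supp_card: "card (supp w) \<le> N" for w
  proof -
    have "card (supp w) \<le> card {..<N}" unfolding supp_def by (intro card_mono) auto
    then show ?thesis by simp
  qed
  define M where "M = N * N + 1"
  define \<mu> where "\<mu> w = card (supp w) * M + (\<Sum>k\<in>supp w. hgt N S k)" for w
  have hsum_le: "(\<Sum>k\<in>supp w. hgt N S k) \<le> N * N" for w
  proof -
    have "(\<Sum>k\<in>supp w. hgt N S k) \<le> card (supp w) * N"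
      using sum_bounded_above[of "supp w" "hgt N S" N] hgt_le by auto
    also have "\<dots> \<le> N * N" using supp_card by (intro mult_le_mono1) auto
    finally show ?thesis .
  qed
  have nz_supp: "w \<in> carrier_vec N \<Longrightarrow> w \<noteq> 0\<^sub>v N \<Longrightarrow> supp w \<noteq> {}" for w
  proof
    assume "w \<in> carrier_vec N" "w \<noteq> 0\<^sub>v N" "supp w = {}"
    then have "w = 0\<^sub>v N" unfolding supp_def by (intro eq_vecI) auto
    then show False using \<open>w \<noteq> 0\<^sub>v N\<close> by simp
  qed
  obtain w0 where "w0 \<in> W" "w0 \<noteq> 0\<^sub>v N" using Wne W0 by blast
  then have "\<exists>w. (w \<in> W \<and> w \<noteq> 0\<^sub>v N) \<and> (\<forall>v. v \<in> W \<and> v \<noteq> 0\<^sub>v N \<longrightarrow> \<mu> w \<le> \<mu> v)"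
    using ex_has_least_nat[of "\<lambda>w. w \<in> W \<and> w \<noteq> 0\<^sub>v N" w0 \<mu>] by blast
  then obtain w where wW: "w \<in> W" and wnz: "w \<noteq> 0\<^sub>v N"
    and wmin: "\<And>v. v \<in> W \<Longrightarrow> v \<noteq> 0\<^sub>v N \<Longrightarrow> \<mu> w \<le> \<mu> v" by blast
  have wc: "w \<in> carrier_vec N" using wW Wc by auto
  obtain k0 where k0: "k0 \<in> supp w" using nz_supp[OF wc wnz] by blast
  have k0N: "k0 < N" "w $ k0 \<noteq> 0" using k0 unfolding supp_def by auto

  have diag: "A $$ (p,k) = 0" if A: "A \<in> S" and k: "k \<in> supp w" and p: "p < N" "p \<noteq> k" for A k p
  proof (rule ccontr)
    assume Apk: "A $$ (p,k) \<noteq> 0"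
    obtain \<sigma> where js: "jstruct N A \<sigma>" using J A by blast
    have Ac: "A \<in> carrier_mat N N" using S_dim A by auto
    have kN: "k < N" "w $ k \<noteq> 0" using k unfolding supp_def by auto
    define v where "v = A *\<^sub>v w"
    have vW: "v \<in> W" using W_inv A wW v_def by auto
    have vc: "v \<in> carrier_vec N" using Ac wc v_def by auto
    have ex: "\<exists>q. q < N \<and> A $$ (p',q) \<noteq> 0 \<and> w $ q \<noteq> 0" if p': "p' \<in> supp v" for p'
    proof -
      have pN: "p' < N" "v $ p' \<noteq> 0" using p' unfolding supp_def by auto
      then have "(\<Sum>q\<in>{0..<N}. A $$ (p',q) * w $ q) \<noteq> 0"
        using mv_index[OF Ac wc pN(1)] v_def by simp
      then obtain q where "q \<in> {0..<N}" "A $$ (p',q) * w $ q \<noteq> 0"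
        by (rule sum.not_neutral_contains_not_neutral)
      then show ?thesis by auto
    qed
    define \<psi> where "\<psi> p' = (SOME q. q < N \<and> A $$ (p',q) \<noteq> 0 \<and> w $ q \<noteq> 0)" for p'
    have \<psi>: "\<psi> p' < N \<and> A $$ (p',\<psi> p') \<noteq> 0 \<and> w $ (\<psi> p') \<noteq> 0" if "p' \<in> supp v" for p'
      unfolding \<psi>_def using someI_ex[OF ex[OF that]] .
    have \<psi>supp: "\<psi> ` supp v \<subseteq> supp w" using \<psi> unfolding supp_def by auto
    have \<psi>inj: "inj_on \<psi> (supp v)"
    proof (rule inj_onI)
      fix x y assume xy: "x \<in> supp v" "y \<in> supp v" "\<psi> x = \<psi> y"
      have "x < N" "y < N" using xy unfolding supp_def by auto
      then show "x = y" using jstruct_col_inj[OF js, of x y "\<psi> x"] \<psi>[OF xy(1)] \<psi>[OF xy(2)] xy(3) by auto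
    qed
    have hle: "hgt N S x \<le> hgt N S (\<psi> x)" if x: "x \<in> supp v" for x
    proof (cases "x = \<psi> x")
      case True then show ?thesis by simp
    next
      case False
      have "x < N" using x unfolding supp_def by auto
      then show ?thesis using hgt_less[OF J S_dim S_comm \<open>x < N\<close> _ A _ False] \<psi>[OF x] by auto
    qed
    have vp: "v $ p = A $$ (p,k) * w $ k"
    proof -
      have "v $ p = (\<Sum>q\<in>{0..<N}. A $$ (p,q) * w $ q)" using mv_index[OF Ac wc p(1)] v_def by simp
      also have "\<dots> = (\<Sum>q\<in>{0..<N}. if q = k then A $$ (p,k) * w $ k else 0)"
      proof (rule sum.cong)
        fix q assume q: "q \<in> {0..<N}"
        show "A $$ (p,q) * w $ q = (if q = k then A $$ (p,k) * w $ k else 0)"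
        proof (cases "q = k")
          case False
          then have "A $$ (p,q) = 0" using jstruct_row_inj[OF js p(1) _ kN(1), of q] q Apk by auto
          then show ?thesis using False by simp
        qed simp
      qed simp
      also have "\<dots> = A $$ (p,k) * w $ k" using kN by simp
      finally show ?thesis .
    qed
    have pv: "p \<in> supp v" using vp Apk kN p unfolding supp_def by auto
    have \<psi>p: "\<psi> p = k" using jstruct_row_inj[OF js p(1) _ kN(1)] \<psi>[OF pv] Apk by auto
    have "(\<Sum>x\<in>supp v. hgt N S x) < (\<Sum>x\<in>supp v. hgt N S (\<psi> x))"
    proof (rule sum_strict_mono_ex1)
      show "finite (supp v)" by (rule supp_fin)
      show "\<forall>x\<in>supp v. hgt N S x \<le> hgt N S (\<psi> x)" using hle by auto
      show "\<exists>x\<in>supp v. hgt N S x < hgt N S (\<psi> x)"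
        using pv \<psi>p hgt_less[OF J S_dim S_comm p(1) kN(1) A Apk p(2)] by auto
    qed
    also have "\<dots> = (\<Sum>x\<in>\<psi> ` supp v. hgt N S x)" using sum.reindex[OF \<psi>inj, of "hgt N S"] by (simp add: o_def)
    also have "\<dots> \<le> (\<Sum>x\<in>supp w. hgt N S x)" by (rule sum_mono2[OF supp_fin \<psi>supp]) auto
    finally have hlt: "(\<Sum>x\<in>supp v. hgt N S x) < (\<Sum>x\<in>supp w. hgt N S x)" .
    have "card (supp v) = card (\<psi> ` supp v)" using card_image[OF \<psi>inj] by simp
    also have "\<dots> \<le> card (supp w)" by (rule card_mono[OF supp_fin \<psi>supp])
    finally have "card (supp v) * M \<le> card (supp w) * M" by (rule mult_le_mono1)
    then have "\<mu> v < \<mu> w" using hlt unfolding \<mu>_def by linarith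
    moreover have "v \<noteq> 0\<^sub>v N" using pv vc unfolding supp_def by auto
    ultimately show False using wmin[OF vW] by auto
  qed

  have Aw: "(A *\<^sub>v w) $ p = A $$ (p,p) * w $ p" if A: "A \<in> S" and p: "p < N" for A p
  proof -
    have Ac: "A \<in> carrier_mat N N" using S_dim A by auto
    have "(A *\<^sub>v w) $ p = (\<Sum>q\<in>{0..<N}. A $$ (p,q) * w $ q)" using mv_index[OF Ac wc p] by simp
    also have "\<dots> = (\<Sum>q\<in>{0..<N}. if q = p then A $$ (p,p) * w $ p else 0)"
    proof (rule sum.cong)
      fix q assume q: "q \<in> {0..<N}"
      show "A $$ (p,q) * w $ q = (if q = p then A $$ (p,p) * w $ p else 0)"
      proof (cases "q = p")
        case False
        show ?thesis
        proof (cases "w $ q = 0")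
          case False
          then have "q \<in> supp w" using q unfolding supp_def by auto
          then have "A $$ (p,q) = 0" using diag[OF A _ p] \<open>q \<noteq> p\<close> by auto
          then show ?thesis using \<open>q \<noteq> p\<close> by simp
        qed (use \<open>q \<noteq> p\<close> in simp)
      qed simp
    qed simp
    also have "\<dots> = A $$ (p,p) * w $ p" using p by simp
    finally show ?thesis .
  qed

  have eig: "A $$ (k,k) = A $$ (k0,k0)" if A: "A \<in> S" and k: "k \<in> supp w" for A k
  proof (rule ccontr)
    assume ne: "A $$ (k,k) \<noteq> A $$ (k0,k0)"
    have Ac: "A \<in> carrier_mat N N" using S_dim A by auto
    have kN: "k < N" "w $ k \<noteq> 0" using k unfolding supp_def by auto
    define v where "v = A *\<^sub>v w + (- A $$ (k0,k0)) \<cdot>\<^sub>v w"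
    have vW: "v \<in> W" unfolding v_def using Wadd Wsm W_inv A wW by auto
    have vc: "v \<in> carrier_vec N" using Ac wc v_def by auto
    have vi: "v $ p = (A $$ (p,p) - A $$ (k0,k0)) * w $ p" if "p < N" for p
      using Aw[OF A that] that wc Ac unfolding v_def by (simp add: algebra_simps)
    have vnz: "v \<noteq> 0\<^sub>v N"
    proof
      assume "v = 0\<^sub>v N"
      then have "v $ k = 0" using kN by simp
      then show False using vi[OF kN(1)] ne kN by simp
    qed
    have ssub: "supp v \<subseteq> supp w - {k0}" using vi unfolding supp_def by auto
    have "supp v \<subset> supp w" using ssub k0 by blast
    then have "card (supp v) < card (supp w)" by (rule psubset_card_mono[OF supp_fin])
    then have "card (supp v) * M + M \<le> card (supp w) * M"
      using mult_le_mono1[of "Suc (card (supp v))" "card (supp w)" M] by simp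
    moreover have "(\<Sum>k\<in>supp v. hgt N S k) < M" using hsum_le[of v] M_def by simp
    ultimately have "\<mu> v < \<mu> w" unfolding \<mu>_def by linarith
    then show False using wmin[OF vW vnz] by simp
  qed

  have cebv: "common_eigen_basis_vec N S k" if k: "k \<in> supp w" for k
  proof -
    have kN: "k < N" using k unfolding supp_def by auto
    have "A *\<^sub>v unit_vec N k = A $$ (k,k) \<cdot>\<^sub>v unit_vec N k" if A: "A \<in> S" for A
      using jstruct_col_diag[of A N k] S_dim A kN diag[OF A k] by auto
    then show ?thesis unfolding common_eigen_basis_vec_def using kN by blast
  qed

  have only: "supp w = {k0}"
  proof (rule ccontr)
    assume "supp w \<noteq> {k0}"
    then obtain k where k: "k \<in> supp w" "k \<noteq> k0" using k0 by blast
    have kN: "k < N" using k unfolding supp_def by auto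
    obtain A c d where A: "A \<in> S" and c: "A *\<^sub>v unit_vec N k = c \<cdot>\<^sub>v unit_vec N k"
      and d: "A *\<^sub>v unit_vec N k0 = d \<cdot>\<^sub>v unit_vec N k0" and cd: "c \<noteq> d"
      using S_sep[rule_format, of k k0] cebv[OF k(1)] cebv[OF k0] k(2) by blast
    have Ac: "A \<in> carrier_mat N N" using S_dim A by auto
    have "(A *\<^sub>v unit_vec N k) $ k = A $$ (k,k)" using mult_unit_col[OF Ac kN] kN by simp
    then have "c = A $$ (k,k)" using c kN by simp
    moreover have "(A *\<^sub>v unit_vec N k0) $ k0 = A $$ (k0,k0)" using mult_unit_col[OF Ac k0N(1)] k0N by simp
    then have "d = A $$ (k0,k0)" using d k0N by simp
    ultimately show False using eig[OF A k(1)] cd by simp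
  qed
  have "unit_vec N k0 = (1 / w $ k0) \<cdot>\<^sub>v w"
  proof (rule eq_vecI)
    fix p assume "p < dim_vec ((1 / w $ k0) \<cdot>\<^sub>v w)"
    then have p: "p < N" using wc by simp
    show "unit_vec N k0 $ p = ((1 / w $ k0) \<cdot>\<^sub>v w) $ p"
    proof (cases "p = k0")
      case False
      then have "w $ p = 0" using only p unfolding supp_def by auto
      then show ?thesis using False p k0N wc by simp
    qed (use k0N wc in simp)
  qed (use wc in simp)
  then have "unit_vec N k0 \<in> W" using Wsm wW by simp
  then show "\<exists>i. common_eigen_basis_vec N S i \<and> unit_vec N i \<in> W" using cebv[OF k0] by blast
qed

end
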